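(* Let $\beta\in(3/2,\beta^*]$, let $\vec z\in S_\beta$ and let $\vec z=\sum_{i=1}^\infty a_i\beta^{-i}$ with $a_i\in\{\vec q_0,\vec q_1,\vec q_2\}$. Then: (i) if $\vec z\in E_i$ for some $i\in\{0,1,2\}$, then $a_1=\vec q_i$; (ii) if $\vec z\in C_{ij}$ for some $ij\in\{01,12,02\}$, then $a_1\in\{\vec q_i,\vec q_j\}$.
   Context: $\beta^*\approx1.5437$ is the real root of $x^3-2x^2+2x=2$. $\vec q_0=(0,0)$, $\vec q_1=(1,0)$, $\vec q_2=(0,1)$, $f_{\vec q_i}(\vec z)=(\vec z+\vec q_i)/\beta$ (write $f_i=f_{\vec q_i}$), $S_\beta$ the attractor of this IFS. $H=\{(x,y):x<\frac1\beta,\ y<\frac1\beta,\ x+y>\frac{1}{\beta(\beta-1)}\}$. Define $\tilde E_0=([0,\frac1\beta)\times[0,\frac1\beta))\setminus H$; $\tilde E_1=\{0\le y<\frac1\beta,\ \frac{1}{\beta(\beta-1)}<x+y\le\frac1{\beta-1}\}\setminus H$; $\tilde E_2=\{0\le x<\frac1\beta,\ \frac{1}{\beta(\beta-1)}<x+y\le\frac1{\beta-1}\}\setminus H$; $\tilde C_{01}=\{x\ge\frac1\beta,\ y\ge0,\ x+y\le\frac{1}{\beta(\beta-1)}\}$; $\tilde C_{12}=\{x\ge\frac1\beta,\ y\ge\frac1\beta,\ x+y\le\frac1{\beta-1}\}$; $\tilde C_{02}=\{x\ge0,\ y\ge\frac1\beta,\ x+y\le\frac{1}{\beta(\beta-1)}\}$.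 For $\{i,j,k\}=\{0,1,2\}$ let $E_i=\bigl(\tilde E_i\cup\bigcup_{n\ge1}f_jf_i^n(H)\cup\bigcup_{n\ge1}f_kf_i^n(H)\bigr)\setminus\bigcup_{n\ge0}f_i^n(H)$, and for $ij\in\{01,12,02\}$ let $C_{ij}=\tilde C_{ij}\setminus\bigl(\bigcup_{n\ge1}f_if_j^n(H)\cup\bigcup_{n\ge1}f_jf_i^n(H)\bigr)$. *)

theory Defs
  imports "HOL-Analysis.Analysis"
begin

definition beta_star :: real where
  "beta_star = (THE x::real. x^3 - 2*x^2 + 2*x = 2)"

definition qv :: "nat \<Rightarrow> real \<times> real" where
  "qv i = (if i = 1 then (1, 0) else if i = 2 then (0, 1) else (0, 0))"

definition fmap :: "real \<Rightarrow> nat \<Rightarrow> real \<times> real \<Rightarrow> real \<times> real" where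
  "fmap \<beta> i z = (1 / \<beta>) *\<^sub>R (z + qv i)"

definition attractor :: "real \<Rightarrow> (real \<times> real) set" where
  "attractor \<beta> = (THE K. compact K \<and> K \<noteq> {} \<and> K = (\<Union>i\<in>{0,1,2}. fmap \<beta> i ` K))"

definition Hset :: "real \<Rightarrow> (real \<times> real) set" where
  "Hset \<beta> = {(x, y). x < 1/\<beta> \<and> y < 1/\<beta> \<and> x + y > 1/(\<beta>*(\<beta>-1))}"

definition Et :: "real \<Rightarrow> nat \<Rightarrow> (real \<times> real) set" where
  "Et \<beta> i =
    (if i = 0 then {(x, y). 0 \<le> x \<and> x < 1/\<beta> \<and> 0 \<le> y \<and> y < 1/\<beta>}
     else if i = 1 then {(x, y). 0 \<le> y \<and> y < 1/\<beta> \<and> 1/(\<beta>*(\<beta>-1)) < x + y \<and> x + y \<le> 1/(\<beta>-1)}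
     else {(x, y). 0 \<le> x \<and> x < 1/\<beta> \<and> 1/(\<beta>*(\<beta>-1)) < x + y \<and> x + y \<le> 1/(\<beta>-1)})
    - Hset \<beta>"

definition Ct :: "real \<Rightarrow> nat \<Rightarrow> nat \<Rightarrow> (real \<times> real) set" where
  "Ct \<beta> i j =
    (if (i, j) = (0, 1) then {(x, y). x \<ge> 1/\<beta> \<and> y \<ge> 0 \<and> x + y \<le> 1/(\<beta>*(\<beta>-1))}
     else if (i, j) = (1, 2) then {(x, y). x \<ge> 1/\<beta> \<and> y \<ge> 1/\<beta> \<and> x + y \<le> 1/(\<beta>-1)}
     else {(x, y). x \<ge> 0 \<and> y \<ge> 1/\<beta> \<and> x + y \<le> 1/(\<beta>*(\<beta>-1))})"

definition Eset :: "real \<Rightarrow> nat \<Rightarrow> (real \<times> real) set" where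
  "Eset \<beta> i =
    (Et \<beta> i \<union> (\<Union>j\<in>{0,1,2} - {i}. \<Union>n\<in>{1..}. fmap \<beta> j ` ((fmap \<beta> i ^^ n) ` Hset \<beta>)))
    - (\<Union>n. (fmap \<beta> i ^^ n) ` Hset \<beta>)"

definition Cset :: "real \<Rightarrow> nat \<Rightarrow> nat \<Rightarrow> (real \<times> real) set" where
  "Cset \<beta> i j =
    Ct \<beta> i j - ((\<Union>n\<in>{1..}. fmap \<beta> i ` ((fmap \<beta> j ^^ n) ` Hset \<beta>))
              \<union> (\<Union>n\<in>{1..}. fmap \<beta> j ` ((fmap \<beta> i ^^ n) ` Hset \<beta>)))"

end

theory Submission
  imports Defs
begin

definition Qs :: "real \<Rightarrow> nat \<Rightarrow> (real \<times> real) set" where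
  "Qs \<beta> k = (if k = 0 then {(x, y). x + y > 1/(\<beta>*(\<beta>-1))}
     else if k = 1 then {(x, y). x < 1/\<beta>} else {(x, y). y < 1/\<beta>})"

definition Rs :: "real \<Rightarrow> nat \<Rightarrow> (real \<times> real) set" where
  "Rs \<beta> k = (if k = 0 then {(x, y). 0 \<le> x \<and> 0 \<le> y \<and> x + y \<le> 1/(\<beta>*(\<beta>-1))}
     else if k = 1 then {(x, y). 1/\<beta> \<le> x \<and> 0 \<le> y} else {(x, y). 0 \<le> x \<and> 1/\<beta> \<le> y})"

definition Ts :: "real \<Rightarrow> (real \<times> real) set" where
  "Ts \<beta> = {(x, y). 0 \<le> x \<and> 0 \<le> y \<and> x + y \<le> 1/(\<beta>-1)}"

lemma Et_Q: assumes "i \<in> {0,1,2}" "k \<in> {0,1,2}" "k \<noteq> i" shows "Et \<beta> i \<subseteq> Qs \<beta> k"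
  using assms by (auto simp: Et_def Qs_def)
lemma Ct_R: assumes "(i,k) \<in> {(0,1),(1,2),(0,2)}" "j \<in> {0,1,2}" "j \<noteq> i" "j \<noteq> k"
  "2/\<beta> > 1/(\<beta>*(\<beta>-1))" "z \<in> Ct \<beta> i k" "z \<in> Rs \<beta> j" shows False
proof -
  obtain x y where z: "z = (x,y)" by fastforce
  consider "i = 0" "k = 1" "j = 2" | "i = 1" "k = 2" "j = 0" | "i = 0" "k = 2" "j = 1" using assms(1-4) by auto
  then show False
  proof cases
    case 1 then show ?thesis using assms(5-7) z by (simp add: Ct_def Rs_def)
  next
    case 2 then show ?thesis using assms(5-7) z by (simp add: Ct_def Rs_def)
  next
    case 3 then show ?thesis using assms(5-7) z by (simp add: Ct_def Rs_def)
  qed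
qed

lemma fmap_eq: "fmap \<beta> j (x, y) = ((x + fst (qv j)) / \<beta>, (y + snd (qv j)) / \<beta>)"
  by (cases "qv j") (simp add: fmap_def divide_inverse algebra_simps)

lemma RQ_disj: "p \<in> Rs \<beta> k \<Longrightarrow> p \<in> Qs \<beta> k \<Longrightarrow> False"
  by (cases p) (auto simp: Rs_def Qs_def split: if_splits)

lemma c_ineq:
  fixes \<beta> s :: real
  assumes "1 < \<beta>" "s > 1/(\<beta>*(\<beta>-1))"
  shows "(s + 1) / \<beta> > 1/(\<beta>*(\<beta>-1))"
proof -
  have "1/(\<beta>*(\<beta>-1)) + 1 \<ge> 1/(\<beta>-1)"
  proof -
    have n1: "\<beta> \<noteq> 0" "\<beta> - 1 \<noteq> 0" using assms by auto
    have "1/(\<beta>-1) - 1/(\<beta>*(\<beta>-1)) = (\<beta> - 1)/(\<beta>*(\<beta>-1))" using n1 by (simp add: diff_divide_distrib[symmetric] divide_simps)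
    also have "\<dots> = 1/\<beta>" using n1 by simp
    finally have "1/(\<beta>-1) - 1/(\<beta>*(\<beta>-1)) = 1/\<beta>" .
    moreover have "1/\<beta> \<le> 1" using assms by simp
    ultimately show ?thesis by linarith
  qed
  hence "s + 1 > 1/(\<beta>-1)" using assms by linarith
  hence "(s+1)/\<beta> > (1/(\<beta>-1))/\<beta>" by (rule divide_strict_right_mono) (use assms in auto)
  also have "(1/(\<beta>-1))/\<beta> = 1/(\<beta>*(\<beta>-1))" by (simp add: mult.commute)
  finally show ?thesis .
qed

lemma Q_pres:
  assumes "1 < \<beta>" "j \<noteq> k" "j \<in> {0,1,2}" "k \<in> {0,1,2}" "p \<in> Qs \<beta> k"
  shows "fmap \<beta> j p \<in> Qs \<beta> k"
proof -
  obtain x y where p: "p = (x, y)" by fastforce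
  have b0: "0 < \<beta>" using assms by simp
  have ib: "1/\<beta> < 1" using assms by simp
  show ?thesis
  proof (cases "k = 0")
    case True
    then have j: "j = 1 \<or> j = 2" using assms by auto
    have "x + y > 1/(\<beta>*(\<beta>-1))" using assms True p by (simp add: Qs_def)
    hence "(x + y + 1)/\<beta> > 1/(\<beta>*(\<beta>-1))" using c_ineq assms(1) by blast
    then show ?thesis using j True p
      by (auto simp: Qs_def fmap_eq qv_def add_divide_distrib)
  next
    case False
    note kf = False
    show ?thesis
    proof (cases "k = 1")
      case True
      then have j: "j = 0 \<or> j = 2" using assms by auto
      have "x < 1/\<beta>" using assms True p by (simp add: Qs_def)
      hence "x < 1" using ib by linarith
      hence "x / \<beta> < 1/\<beta>" using b0 by (rule divide_strict_right_mono)
      then show ?thesis using j True p by (auto simp: Qs_def fmap_eq qv_def)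
    next
      case False
      then have k: "k = 2" using kf assms by auto
      then have j: "j = 0 \<or> j = 1" using assms by auto
      have "y < 1/\<beta>" using assms k p by (simp add: Qs_def)
      hence "y < 1" using ib by linarith
      hence "y / \<beta> < 1/\<beta>" using b0 by (rule divide_strict_right_mono)
      then show ?thesis using j k p by (auto simp: Qs_def fmap_eq qv_def)
    qed
  qed
qed

lemma T_to_R:
  assumes "1 < \<beta>" "p \<in> Ts \<beta>" "j \<in> {0,1,2}"
  shows "fmap \<beta> j p \<in> Rs \<beta> j"
proof -
  obtain x y where p: "p = (x, y)" by fastforce
  have b0: "0 < \<beta>" using assms by simp
  have h: "0 \<le> x" "0 \<le> y" "x + y \<le> 1/(\<beta>-1)" using assms p by (auto simp: Ts_def)
  have "(x + y)/\<beta> \<le> (1/(\<beta>-1))/\<beta>" using h b0 by (intro divide_right_mono) auto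
  hence s: "x/\<beta> + y/\<beta> \<le> 1/(\<beta>*(\<beta>-1))" by (simp add: add_divide_distrib mult.commute)
  have "(x+1)/\<beta> \<ge> 1/\<beta>" "(y+1)/\<beta> \<ge> 1/\<beta>" using h b0 by (simp_all add: divide_right_mono)
  then show ?thesis using assms(3) p h s b0
    by (auto simp: Rs_def fmap_eq qv_def)
qed

lemma H_Q: "k \<in> {0,1,2} \<Longrightarrow> Hset \<beta> \<subseteq> Qs \<beta> k"
  by (auto simp: Hset_def Qs_def)

lemma iter_Q:
  assumes "1 < \<beta>" "i \<in> {0,1,2}" "k \<in> {0,1,2}" "k \<noteq> i"
  shows "(fmap \<beta> i ^^ n) ` Hset \<beta> \<subseteq> Qs \<beta> k"
proof (induction n)
  case 0 then show ?case using H_Q assms by simp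
next
  case (Suc n)
  show ?case
  proof
    fix p assume "p \<in> (fmap \<beta> i ^^ Suc n) ` Hset \<beta>"
    then obtain h where h: "h \<in> Hset \<beta>" "p = fmap \<beta> i ((fmap \<beta> i ^^ n) h)" by auto
    have "(fmap \<beta> i ^^ n) h \<in> Qs \<beta> k" using Suc h by auto
    then show "p \<in> Qs \<beta> k" using Q_pres[of \<beta> i k] assms h by auto
  qed
qed

lemma fmap_inj: "0 < \<beta> \<Longrightarrow> fmap \<beta> j p = fmap \<beta> j q \<Longrightarrow> p = q"
  by (simp add: fmap_def)

lemma series_T:
  assumes "1 < \<beta>" "\<forall>i\<ge>1. b i \<in> {qv 0, qv 1, qv 2}"
    and "(\<lambda>i. (1 / \<beta> ^ Suc i) *\<^sub>R b (Suc i)) sums w"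
  shows "w \<in> Ts \<beta>"
proof -
  have b0: "0 < \<beta>" using assms by simp
  have dig: "0 \<le> fst (b (Suc i)) \<and> 0 \<le> snd (b (Suc i)) \<and> fst (b (Suc i)) + snd (b (Suc i)) \<le> 1" for i
  proof -
    have "b (Suc i) \<in> {qv 0, qv 1, qv 2}" using assms(2) by simp
    thus ?thesis by (auto simp: qv_def)
  qed
  have sf: "(\<lambda>i. fst ((1 / \<beta> ^ Suc i) *\<^sub>R b (Suc i))) sums fst w"
    using bounded_linear.sums[OF bounded_linear_fst assms(3)] by simp
  have ss: "(\<lambda>i. snd ((1 / \<beta> ^ Suc i) *\<^sub>R b (Suc i))) sums snd w"
    using bounded_linear.sums[OF bounded_linear_snd assms(3)] by simp
  have f0: "0 \<le> fst w"
    using sf dig b0 by (intro sums_le[OF _ sums_zero sf]) simp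
  have s0: "0 \<le> snd w"
    using ss dig b0 by (intro sums_le[OF _ sums_zero ss]) simp
  have sfs: "(\<lambda>i. fst ((1 / \<beta> ^ Suc i) *\<^sub>R b (Suc i)) + snd ((1 / \<beta> ^ Suc i) *\<^sub>R b (Suc i))) sums (fst w + snd w)"
    using sums_add[OF sf ss] .
  have g: "(\<lambda>i. (1/\<beta>) * (1/\<beta>) ^ i) sums ((1/\<beta>) * (1 / (1 - 1/\<beta>)))"
    using geometric_sums[of "1/\<beta>"] assms(1) by (intro sums_mult) simp
  have geq: "(1/\<beta>) * (1 / (1 - 1/\<beta>)) = 1/(\<beta>-1)" using assms(1) by (simp add: field_simps)
  have le: "fst w + snd w \<le> 1/(\<beta>-1)"
  proof -
    have "fst w + snd w \<le> (1/\<beta>) * (1 / (1 - 1/\<beta>))"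
    proof (rule sums_le[OF _ sfs g])
      fix i
      have "fst (b (Suc i)) + snd (b (Suc i)) \<le> 1" using dig by blast
      hence "(1 / \<beta> ^ Suc i) * (fst (b (Suc i)) + snd (b (Suc i))) \<le> (1 / \<beta> ^ Suc i) * 1"
        using b0 by (intro mult_left_mono) simp_all
      thus "fst ((1 / \<beta> ^ Suc i) *\<^sub>R b (Suc i)) + snd ((1 / \<beta> ^ Suc i) *\<^sub>R b (Suc i)) \<le> (1/\<beta>) * (1/\<beta>) ^ i"
        by (simp add: distrib_left power_one_over)
    qed
    thus ?thesis using geq by simp
  qed
  show ?thesis using f0 s0 le by (cases w) (auto simp: Ts_def)
qed

lemma series_shift:
  fixes b :: "nat \<Rightarrow> real \<times> real"
  assumes "0 < \<beta>" "(\<lambda>i. (1 / \<beta> ^ Suc i) *\<^sub>R b (Suc i)) sums w"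
  shows "(\<lambda>i. (1 / \<beta> ^ Suc i) *\<^sub>R b (Suc (Suc i))) sums (\<beta> *\<^sub>R w - b 1)"
proof -
  have "(\<lambda>i. (1 / \<beta> ^ Suc (Suc i)) *\<^sub>R b (Suc (Suc i))) sums (w - (1/\<beta>) *\<^sub>R b 1)"
    using sums_Suc_iff[where f="\<lambda>i. (1 / \<beta> ^ Suc i) *\<^sub>R b (Suc i)"] assms(2) by simp
  hence A: "(\<lambda>i. \<beta> *\<^sub>R ((1 / \<beta> ^ Suc (Suc i)) *\<^sub>R b (Suc (Suc i)))) sums (\<beta> *\<^sub>R (w - (1/\<beta>) *\<^sub>R b 1))"
    by (rule sums_scaleR_right)
  have eqf: "(\<lambda>i. \<beta> *\<^sub>R ((1 / \<beta> ^ Suc (Suc i)) *\<^sub>R b (Suc (Suc i)))) = (\<lambda>i. (1 / \<beta> ^ Suc i) *\<^sub>R b (Suc (Suc i)))"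
    using assms(1) by (intro ext) simp
  have eqv: "\<beta> *\<^sub>R (w - (1/\<beta>) *\<^sub>R b 1) = \<beta> *\<^sub>R w - b 1"
    using assms(1) by (simp add: algebra_simps)
  show ?thesis using A unfolding eqf eqv .
qed

lemma series_decomp:
  assumes "1 < \<beta>" "\<forall>i\<ge>1. b i \<in> {qv 0, qv 1, qv 2}"
    and "(\<lambda>i. (1 / \<beta> ^ Suc i) *\<^sub>R b (Suc i)) sums w"
  obtains j w' where "j \<in> {0,1,2}" "b 1 = qv j" "w = fmap \<beta> j w'" "w' \<in> Ts \<beta>"
    "(\<lambda>i. (1 / \<beta> ^ Suc i) *\<^sub>R b (Suc (Suc i))) sums w'"
proof -
  have b0: "0 < \<beta>" using assms by simp
  obtain j where j: "j \<in> {0,1,2}" "b 1 = qv j" using assms(2) by auto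
  define w' where "w' = \<beta> *\<^sub>R w - b 1"
  have sw: "(\<lambda>i. (1 / \<beta> ^ Suc i) *\<^sub>R b (Suc (Suc i))) sums w'"
    unfolding w'_def by (rule series_shift[OF b0 assms(3)])
  have dd: "\<forall>i\<ge>1. (\<lambda>i. b (Suc i)) i \<in> {qv 0, qv 1, qv 2}" using assms(2) by simp
  have "w' \<in> Ts \<beta>"
    using series_T[OF assms(1) dd] sw by simp
  moreover have "w = fmap \<beta> j w'" using j b0 by (simp add: w'_def fmap_def)
  ultimately show ?thesis using that j sw by blast
qed

lemma not_in_iter:
  assumes "1 < \<beta>" "i \<in> {0,1,2}"
  shows "\<forall>i\<ge>1. b i \<in> {qv 0, qv 1, qv 2} \<Longrightarrow> (\<lambda>i. (1 / \<beta> ^ Suc i) *\<^sub>R b (Suc i)) sums w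
     \<Longrightarrow> w \<notin> (fmap \<beta> i ^^ n) ` Hset \<beta>"
proof (induction n arbitrary: b w)
  case 0
  obtain j w' where d: "j \<in> {0,1,2}" "b 1 = qv j" "w = fmap \<beta> j w'" "w' \<in> Ts \<beta>"
    and "(\<lambda>i. (1 / \<beta> ^ Suc i) *\<^sub>R b (Suc (Suc i))) sums w'"
    by (rule series_decomp[OF assms(1) 0(1) 0(2)])
  have "w \<in> Rs \<beta> j" using T_to_R[OF assms(1) d(4) d(1)] d(3) by simp
  moreover have "Hset \<beta> \<subseteq> Qs \<beta> j" using H_Q d by simp
  ultimately have "w \<notin> Hset \<beta>" using RQ_disj by blast
  thus ?case by simp
next
  case (Suc n)
  obtain j w' where d: "j \<in> {0,1,2}" "b 1 = qv j" "w = fmap \<beta> j w'" "w' \<in> Ts \<beta>"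
    and sw: "(\<lambda>i. (1 / \<beta> ^ Suc i) *\<^sub>R b (Suc (Suc i))) sums w'"
    by (rule series_decomp[OF assms(1) Suc(2) Suc(3)])
  have R: "w \<in> Rs \<beta> j" using T_to_R[OF assms(1) d(4) d(1)] d(3) by simp
  show ?case
  proof
    assume w: "w \<in> (fmap \<beta> i ^^ Suc n) ` Hset \<beta>"
    have "j = i"
    proof (rule ccontr)
      assume "j \<noteq> i"
      hence "w \<in> Qs \<beta> j" using iter_Q[OF assms(1,2) d(1)] w by blast
      thus False using R RQ_disj by blast
    qed
    then obtain h where h: "h \<in> Hset \<beta>" "w = fmap \<beta> i ((fmap \<beta> i ^^ n) h)" using w by auto
    hence eq: "fmap \<beta> i w' = fmap \<beta> i ((fmap \<beta> i ^^ n) h)" using d(3) \<open>j = i\<close> by simp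
    have "w' = (fmap \<beta> i ^^ n) h" using fmap_inj[OF _ eq] assms(1) by simp
    hence "w' \<in> (fmap \<beta> i ^^ n) ` Hset \<beta>" using h by auto
    moreover have "\<forall>i\<ge>1. (\<lambda>i. b (Suc i)) i \<in> {qv 0, qv 1, qv 2}" using Suc(2) by simp
    ultimately show False using Suc.IH[of "\<lambda>i. b (Suc i)" w'] sw by blast
  qed
qed

theorem lemma6p4:
  fixes \<beta> :: real and z :: "real \<times> real" and a :: "nat \<Rightarrow> real \<times> real"
  assumes "3/2 < \<beta>" and "\<beta> \<le> beta_star"
    and "z \<in> attractor \<beta>"
    and "\<forall>i\<ge>1. a i \<in> {qv 0, qv 1, qv 2}"
    and "(\<lambda>i. (1 / \<beta> ^ Suc i) *\<^sub>R a (Suc i)) sums z"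
  shows "(\<forall>i\<in>{0,1,2}. z \<in> Eset \<beta> i \<longrightarrow> a 1 = qv i)
       \<and> (\<forall>(i, j)\<in>{(0,1),(1,2),(0,2)}. z \<in> Cset \<beta> i j \<longrightarrow> a 1 \<in> {qv i, qv j})"
proof -
  have b1: "1 < \<beta>" using assms(1) by simp
  obtain j w where d: "j \<in> {0,1,2}" "a 1 = qv j" "z = fmap \<beta> j w" "w \<in> Ts \<beta>"
    and sw: "(\<lambda>i. (1 / \<beta> ^ Suc i) *\<^sub>R a (Suc (Suc i))) sums w"
    by (rule series_decomp[OF b1 assms(4) assms(5)])
  have dig': "\<forall>i\<ge>1. (\<lambda>i. a (Suc i)) i \<in> {qv 0, qv 1, qv 2}" using assms(4) by simp
  have notin: "\<And>i n. i \<in> {0,1,2} \<Longrightarrow> w \<notin> (fmap \<beta> i ^^ n) ` Hset \<beta>"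
    using not_in_iter[OF b1 _ dig' sw] by simp
  have R: "z \<in> Rs \<beta> j" using T_to_R[OF b1 d(4) d(1)] d(3) by simp
  have part1: "z \<in> Eset \<beta> i \<Longrightarrow> a 1 = qv i" if i: "i \<in> {0,1,2}" for i
  proof -
    assume zE: "z \<in> Eset \<beta> i"
    have "j = i"
    proof (rule ccontr)
      assume ji: "j \<noteq> i"
      have "z \<in> Et \<beta> i \<or> (\<exists>j'\<in>{0,1,2} - {i}. \<exists>n\<ge>1. z \<in> fmap \<beta> j' ` ((fmap \<beta> i ^^ n) ` Hset \<beta>))"
        using zE unfolding Eset_def atLeast_iff by blast
      then show False
      proof
        assume "z \<in> Et \<beta> i"
        hence "z \<in> Qs \<beta> j" using Et_Q[OF i d(1)] ji by blast
        thus False using R RQ_disj by blast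
      next
        assume "\<exists>j'\<in>{0,1,2} - {i}. \<exists>n\<ge>1. z \<in> fmap \<beta> j' ` ((fmap \<beta> i ^^ n) ` Hset \<beta>)"
        then obtain j' n p where j': "j' \<in> {0,1,2}" "j' \<noteq> i" and p: "p \<in> (fmap \<beta> i ^^ n) ` Hset \<beta>" "z = fmap \<beta> j' p"
          by blast
        show False
        proof (cases "j' = j")
          case True
          hence eq: "fmap \<beta> j w = fmap \<beta> j p" using d(3) p(2) by simp
          have "w = p" using fmap_inj[OF _ eq] b1 by simp
          thus False using notin i p by blast
        next
          case False
          have "p \<in> Qs \<beta> j" using iter_Q[OF b1 i d(1) ji] p by blast
          hence "fmap \<beta> j' p \<in> Qs \<beta> j" using Q_pres[OF b1 _ j'(1) d(1)] False by blast
          hence "z \<in> Qs \<beta> j" using p(2) by simp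
          thus False using R RQ_disj by blast
        qed
      qed
    qed
    thus "a 1 = qv i" using d by simp
  qed
  have cc: "2/\<beta> > 1/(\<beta>*(\<beta>-1))"
  proof -
    have "1/(\<beta>*(\<beta>-1)) = (1/(\<beta>-1))/\<beta>" by simp
    moreover have "1/(\<beta>-1) < 2" using assms(1) by (simp add: field_simps)
    moreover have "(1/(\<beta>-1))/\<beta> < 2/\<beta>"
      using \<open>1/(\<beta>-1) < 2\<close> b1 by (intro divide_strict_right_mono) auto
    ultimately show ?thesis by (simp add: mult.commute)
  qed
  have part2: "z \<in> Cset \<beta> i k \<Longrightarrow> a 1 \<in> {qv i, qv k}" if ik: "(i,k) \<in> {(0,1),(1,2),(0,2)}" for i k
  proof -
    assume "z \<in> Cset \<beta> i k"
    hence zC: "z \<in> Ct \<beta> i k" by (simp add: Cset_def)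
    have "j = i \<or> j = k"
    proof (rule ccontr)
      assume "\<not> (j = i \<or> j = k)"
      then show False using Ct_R[OF ik d(1) _ _ cc zC R] by blast
    qed
    thus ?thesis using d by auto
  qed
  show ?thesis using part1 part2 by blast
qed

end
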